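(* Let $\xi\in\mathfrak{so}(n)\times\mathfrak{so}(k)$. The solution of $$\dot S(t)=-\tfrac12\,\mathrm{pr}_{\mathfrak p}\circ\mathrm{ad}_{\mathrm{Ad}_{\exp(t\xi_{\mathfrak h})}(\xi_{\mathfrak p})}\circ S(t),\quad S(0)=\mathrm{id}_{\mathfrak p}$$ is $S\colon I\to O(\mathfrak p)$, $S(t)=\mathrm{Ad}_{\exp(t\xi_{\mathfrak h})}\circ\exp\!\big(-t(\mathrm{ad}_{\xi_{\mathfrak h}}+\tfrac12\,\mathrm{pr}_{\mathfrak p}\circ\mathrm{ad}_{\xi_{\mathfrak p}})\big)$.
   Context: Fix $X\in\mathrm{St}(n,k)=\{Y\in\mathbb{R}^{n\times k}:Y^\top Y=I_k\}$. On $\mathfrak g=\mathfrak{so}(n)\times\mathfrak{so}(k)$ (Lie algebra of $O(n)\times O(k)$) use $\langle(\Omega_1,\Psi_1),(\Omega_2,\Psi_2)\rangle=-\operatorname{tr}(\Omega_1\Omega_2)+2\operatorname{tr}(\Psi_1\Psi_2)$; $\mathfrak h=\{(\Omega,\eta):\Omega X=X\eta\}$ is the Lie algebra of the stabilizer $H$ of $X$ under $(R,\theta)\cdot Y=RY\theta^\top$, $\mathfrak p=\mathfrak h^\perp$, $\mathrm{pr}_{\mathfrak p}$ the projection onto $\mathfrak p$ along $\mathfrak h$, and $\xi_{\mathfrak h},\xi_{\mathfrak p}$ the components of $\xi$. $\mathrm{ad}_YZ=[Y,Z]$, $\mathrm{Ad}$ is conjugation, $O(\mathfrak p)$ the isometry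 group of $(\mathfrak p,\langle\cdot,\cdot\rangle)$; in the formula for $S(t)$ the operators are restricted to $\mathfrak p$. *)

theory Defs
  imports "HOL-Analysis.Analysis"
begin

text \<open>Elements of so(n) x so(k) are pairs of real square matrices; the index
  types 'n and 'k are arbitrary finite types (n = CARD('n), k = CARD('k)).\<close>

type_synonym ('n,'k) gl = "(real^'n::finite^'n) \<times> (real^'k::finite^'k)"

definition skew :: "real^'m::finite^'m \<Rightarrow> bool" where
  "skew M \<longleftrightarrow> transpose M = - M"

definition stiefel :: "(real^'k::finite^'n::finite) set" where
  "stiefel = {Y. transpose Y ** Y = mat 1}"

definition gset :: "('n::finite,'k::finite) gl set" where
  "gset = {(Om, Psi). skew Om \<and> skew Psi}"

definition ip :: "('n::finite,'k::finite) gl \<Rightarrow> ('n::finite,'k::finite) gl \<Rightarrow> real" where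
  "ip a b = - trace (fst a ** fst b) + 2 * trace (snd a ** snd b)"

text \<open>Lie algebra of the stabilizer of X.\<close>
definition hset :: "real^'k::finite^'n::finite \<Rightarrow> ('n::finite,'k::finite) gl set" where
  "hset X = {(Om, eta) \<in> gset. Om ** X = X ** eta}"

definition pset :: "real^'k::finite^'n::finite \<Rightarrow> ('n::finite,'k::finite) gl set" where
  "pset X = {z \<in> gset. \<forall>h \<in> hset X. ip z h = 0}"

definition pr_p :: "real^'k::finite^'n::finite \<Rightarrow> ('n::finite,'k::finite) gl \<Rightarrow> ('n::finite,'k::finite) gl" where
  "pr_p X z = (THE q. q \<in> pset X \<and> z - q \<in> hset X)"

definition comp_h :: "real^'k::finite^'n::finite \<Rightarrow> ('n::finite,'k::finite) gl \<Rightarrow> ('n::finite,'k::finite) gl" where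
  "comp_h X z = z - pr_p X z"

definition comp_p :: "real^'k::finite^'n::finite \<Rightarrow> ('n::finite,'k::finite) gl \<Rightarrow> ('n::finite,'k::finite) gl" where
  "comp_p X z = pr_p X z"

definition ad :: "('n::finite,'k::finite) gl \<Rightarrow> ('n::finite,'k::finite) gl \<Rightarrow> ('n::finite,'k::finite) gl" where
  "ad a b = (fst a ** fst b - fst b ** fst a, snd a ** snd b - snd b ** snd a)"

primrec mpow :: "real^'m::finite^'m \<Rightarrow> nat \<Rightarrow> real^'m::finite^'m" where
  "mpow M 0 = mat 1"
| "mpow M (Suc m) = M ** mpow M m"

definition mexp :: "real^'m::finite^'m \<Rightarrow> real^'m::finite^'m" where
  "mexp M = (\<Sum>m. (1 / fact m) *\<^sub>R mpow M m)"

definition gexp :: "('n::finite,'k::finite) gl \<Rightarrow> ('n::finite,'k::finite) gl" where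
  "gexp a = (mexp (fst a), mexp (snd a))"

definition Ad :: "('n::finite,'k::finite) gl \<Rightarrow> ('n::finite,'k::finite) gl \<Rightarrow> ('n::finite,'k::finite) gl" where
  "Ad g b = (fst g ** fst b ** matrix_inv (fst g), snd g ** snd b ** matrix_inv (snd g))"

definition opexp :: "('v::real_normed_vector \<Rightarrow> 'v) \<Rightarrow> 'v \<Rightarrow> 'v" where
  "opexp A v = (\<Sum>m. (1 / fact m) *\<^sub>R (A ^^ m) v)"

definition Op :: "real^'k::finite^'n::finite \<Rightarrow> (('n::finite,'k::finite) gl \<Rightarrow> ('n::finite,'k::finite) gl) set" where
  "Op X = {L. (\<forall>u\<in>pset X. \<forall>v\<in>pset X. L (u + v) = L u + L v)
             \<and> (\<forall>c. \<forall>u\<in>pset X. L (c *\<^sub>R u) = c *\<^sub>R L u)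
             \<and> bij_betw L (pset X) (pset X)
             \<and> (\<forall>u\<in>pset X. \<forall>v\<in>pset X. ip (L u) (L v) = ip u v)}"

definition Ssol :: "real^'k::finite^'n::finite \<Rightarrow> ('n::finite,'k::finite) gl \<Rightarrow> real \<Rightarrow> ('n::finite,'k::finite) gl \<Rightarrow> ('n::finite,'k::finite) gl" where
  "Ssol X xi t v = Ad (gexp (t *\<^sub>R comp_h X xi))
     (opexp (\<lambda>w. - t *\<^sub>R (ad (comp_h X xi) w + (1/2) *\<^sub>R pr_p X (ad (comp_p X xi) w))) v)"

definition Mrhs :: "real^'k::finite^'n::finite \<Rightarrow> ('n::finite,'k::finite) gl \<Rightarrow> real \<Rightarrow> ('n::finite,'k::finite) gl \<Rightarrow> ('n::finite,'k::finite) gl" where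
  "Mrhs X xi t w = - (1/2) *\<^sub>R pr_p X (ad (Ad (gexp (t *\<^sub>R comp_h X xi)) (comp_p X xi)) w)"

end

theory Submission
  imports Defs
begin


typedef (overloaded) ('a::"{banach,perfect_space}") endo = "UNIV :: ('a \<Rightarrow>\<^sub>L 'a) set"
  by auto

setup_lifting type_definition_endo

instantiation endo :: ("{banach,perfect_space}") real_normed_algebra_1
begin
lift_definition zero_endo :: "'a endo" is 0 .
lift_definition one_endo :: "'a endo" is id_blinfun .
lift_definition plus_endo :: "'a endo \<Rightarrow> 'a endo \<Rightarrow> 'a endo" is "(+)" .
lift_definition minus_endo :: "'a endo \<Rightarrow> 'a endo \<Rightarrow> 'a endo" is "(-)" .
lift_definition uminus_endo :: "'a endo \<Rightarrow> 'a endo" is "uminus" .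
lift_definition times_endo :: "'a endo \<Rightarrow> 'a endo \<Rightarrow> 'a endo" is "blinfun_compose" .
lift_definition scaleR_endo :: "real \<Rightarrow> 'a endo \<Rightarrow> 'a endo" is "scaleR" .
lift_definition norm_endo :: "'a endo \<Rightarrow> real" is norm .
definition dist_endo :: "'a endo \<Rightarrow> 'a endo \<Rightarrow> real" where "dist_endo a b = norm (a - b)"
definition sgn_endo :: "'a endo \<Rightarrow> 'a endo" where "sgn_endo x = scaleR (inverse (norm x)) x"
definition uniformity_endo :: "('a endo \<times> 'a endo) filter" where
  "uniformity_endo = (INF e\<in>{0 <..}. principal {(x, y). dist x y < e})"
definition open_endo :: "'a endo set \<Rightarrow> bool" where
  "open_endo S = (\<forall>x\<in>S. \<forall>\<^sub>F (x', y) in uniformity. x' = x \<longrightarrow> y \<in> S)"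
instance
proof
  fix a b c :: "'a endo" and r s :: real
  show "a * b * c = a * (b * c)" by transfer (rule blinfun_eqI, simp)
  show "(a + b) * c = a * c + b * c" by transfer (rule blinfun_eqI, simp add: blinfun.bilinear_simps)
  show "a * (b + c) = a * b + a * c" by transfer (rule blinfun_eqI, simp add: blinfun.bilinear_simps)
  show "1 * a = a" by transfer (rule blinfun_eqI, simp)
  show "a * 1 = a" by transfer (rule blinfun_eqI, simp)
  show "(0::'a endo) \<noteq> 1" by transfer (metis blinfun_apply_id_blinfun norm_blinfun_id zero_blinfun.rep_eq norm_zero zero_neq_one)
  show "r *\<^sub>R a * b = r *\<^sub>R (a * b)" by transfer (rule blinfun_eqI, simp add: blinfun.bilinear_simps)
  show "a * r *\<^sub>R b = r *\<^sub>R (a * b)" by transfer (rule blinfun_eqI, simp add: blinfun.bilinear_simps)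
  show "norm (a * b) \<le> norm a * norm b" by transfer (rule norm_blinfun_compose)
  show "norm (1::'a endo) = 1" by transfer simp
  show "dist a b = norm (a - b)" by (simp add: dist_endo_def)
  show "sgn a = inverse (norm a) *\<^sub>R a" by (simp add: sgn_endo_def)
  show "(uniformity :: ('a endo \<times> 'a endo) filter) = (INF e\<in>{0 <..}. principal {(x, y). dist x y < e})"
    by (simp add: uniformity_endo_def)
  fix U :: "'a endo set"
  show "open U = (\<forall>x\<in>U. \<forall>\<^sub>F (x', y) in uniformity. x' = x \<longrightarrow> y \<in> U)"
    by (simp add: open_endo_def)
  show "a + b + c = a + (b + c)" by transfer (rule add.assoc)
  show "a + b = b + a" by transfer (rule add.commute)
  show "0 + a = a" by transfer simp
  show "- a + a = 0" by transfer simp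
  show "a - b = a + - b" by transfer simp
  show "r *\<^sub>R (a + b) = r *\<^sub>R a + r *\<^sub>R b" by transfer (rule scaleR_right_distrib)
  show "(r + s) *\<^sub>R a = r *\<^sub>R a + s *\<^sub>R a" by transfer (rule scaleR_left_distrib)
  show "r *\<^sub>R s *\<^sub>R a = (r * s) *\<^sub>R a" by transfer simp
  show "1 *\<^sub>R a = a" by transfer simp
  show "(norm a = 0) = (a = 0)" by transfer simp
  show "norm (a + b) \<le> norm a + norm b" by transfer (rule norm_triangle_ineq)
  show "norm (r *\<^sub>R a) = \<bar>r\<bar> * norm a" by transfer simp
qed
end

instance endo :: ("{banach,perfect_space}") banach
proof
  fix X :: "nat \<Rightarrow> 'a endo"
  assume "Cauchy X"
  hence "Cauchy (\<lambda>n. Rep_endo (X n))"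
    unfolding Cauchy_def dist_norm by transfer
  then obtain L where "(\<lambda>n. Rep_endo (X n)) \<longlonglongrightarrow> L" by (metis Cauchy_convergent convergent_def)
  hence "X \<longlonglongrightarrow> Abs_endo L"
    unfolding LIMSEQ_def dist_norm
    by (metis Abs_endo_inverse UNIV_I minus_endo.rep_eq norm_endo.rep_eq)
  thus "convergent X" by (auto simp: convergent_def)
qed


definition ap :: "'a::{banach,perfect_space} endo \<Rightarrow> 'a \<Rightarrow> 'a" where
  "ap A v = blinfun_apply (Rep_endo A) v"

definition mk :: "('a::{banach,perfect_space} \<Rightarrow> 'a) \<Rightarrow> 'a endo" where
  "mk f = Abs_endo (Blinfun f)"

lemma ap_mk: "bounded_linear f \<Longrightarrow> ap (mk f) v = f v"
  by (simp add: ap_def mk_def Abs_endo_inverse bounded_linear_Blinfun_apply)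

lemma ap_mult: "ap (A * B) v = ap A (ap B v)"
  by (simp add: ap_def times_endo.rep_eq)

lemma ap_one[simp]: "ap 1 v = v"
  by (simp add: ap_def one_endo.rep_eq)

lemma ap_scaleR: "ap (r *\<^sub>R A) v = r *\<^sub>R ap A v"
  by (simp add: ap_def scaleR_endo.rep_eq blinfun.scaleR_left)

lemma ap_uminus: "ap (- A) v = - ap A v"
  by (simp add: ap_def uminus_endo.rep_eq blinfun.minus_left)

lemma ap_add_right: "ap A (u + v) = ap A u + ap A v"
  by (simp add: ap_def blinfun.add_right)

lemma ap_scaleR_right: "ap A (r *\<^sub>R v) = r *\<^sub>R ap A v"
  by (simp add: ap_def blinfun.scaleR_right)

lemma ap_diff_right: "ap A (u - v) = ap A u - ap A v"
  by (simp add: ap_def blinfun.diff_right)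

lemma ap_zero_right[simp]: "ap A 0 = 0"
  by (simp add: ap_def)

lemma bounded_linear_ap: "bounded_linear (\<lambda>A. ap A v)"
proof (rule bounded_linear_intro[where K="norm v"])
  fix A B :: "'a endo" and r :: real
  show "ap (A + B) v = ap A v + ap B v" by (simp add: ap_def plus_endo.rep_eq blinfun.add_left)
  show "ap (r *\<^sub>R A) v = r *\<^sub>R ap A v" by (rule ap_scaleR)
  show "norm (ap A v) \<le> norm A * norm v" by (simp add: ap_def norm_endo.rep_eq norm_blinfun)
qed

lemma ap_pow: "ap (A ^ m) v = (ap A ^^ m) v"
  by (induction m arbitrary: v) (simp_all add: ap_mult)

lemma exp_ap_sums: "(\<lambda>m. (1 / fact m) *\<^sub>R ap (A ^ m) v) sums ap (exp A) v"
proof -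
  have "(\<lambda>n. A ^ n /\<^sub>R fact n) sums exp A"
    unfolding exp_def by (rule summable_sums[OF summable_exp_generic])
  from bounded_linear.sums[OF bounded_linear_ap this, of v]
  show ?thesis by (simp add: ap_scaleR divide_inverse)
qed

lemma opexp_eq:
  assumes "bounded_linear f"
  shows "opexp (\<lambda>w. s *\<^sub>R f w) v = ap (exp (s *\<^sub>R mk f)) v"
proof -
  have "((\<lambda>w. s *\<^sub>R f w) ^^ m) v = ap ((s *\<^sub>R mk f) ^ m) v" for m
    by (induction m) (simp_all add: ap_mult ap_scaleR ap_mk[OF assms] linear.scaleR[OF bounded_linear.linear[OF assms]])
  thus ?thesis unfolding opexp_def using exp_ap_sums[of "s *\<^sub>R mk f" v]
    by (simp add: sums_iff)
qed

lemma exp_ap_deriv: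
  "((\<lambda>s. ap (exp (s *\<^sub>R A)) v) has_vector_derivative ap A (ap (exp (s *\<^sub>R A)) v)) (at s)"
proof -
  have "((\<lambda>s. exp (s *\<^sub>R A)) has_vector_derivative A * exp (s *\<^sub>R A)) (at s)"
    by (rule exp_scaleR_has_vector_derivative_left)
  from bounded_linear.has_vector_derivative[OF bounded_linear_ap this, of v]
  show ?thesis by (simp add: ap_mult)
qed

lemma exp_ap_deriv':
  "((\<lambda>s. ap (exp (s *\<^sub>R A)) v) has_vector_derivative ap (exp (s *\<^sub>R A)) (ap A v)) (at s)"
proof -
  have "((\<lambda>s. exp (s *\<^sub>R A)) has_vector_derivative exp (s *\<^sub>R A) * A) (at s)"
    by (rule exp_scaleR_has_vector_derivative_right)
  from bounded_linear.has_vector_derivative[OF bounded_linear_ap this, of v]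
  show ?thesis by (simp add: ap_mult)
qed

lemma exp_ap_zero[simp]: "ap (exp (0 *\<^sub>R A)) v = v"
  by simp

lemma exp_ap_inv: "ap (exp (s *\<^sub>R A)) (ap (exp ((- s) *\<^sub>R A)) v) = v"
proof -
  have "exp (s *\<^sub>R A) * exp ((- s) *\<^sub>R A) = exp (s *\<^sub>R A + (- s) *\<^sub>R A)"
    by (rule exp_add_commuting[symmetric]) (simp add: algebra_simps)
  also have "\<dots> = 1" by (simp add: scaleR_left_distrib[symmetric])
  finally show ?thesis using ap_mult[of "exp (s *\<^sub>R A)" "exp ((- s) *\<^sub>R A)" v] by simp
qed

lemma exp_ap_comm: "ap (exp (s *\<^sub>R A)) (ap A v) = ap A (ap (exp (s *\<^sub>R A)) v)"
  proof -
  have "exp (s *\<^sub>R A) * (s *\<^sub>R A) = (s *\<^sub>R A) * exp (s *\<^sub>R A)" by (rule exp_times_arg_commute)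
  hence "exp (s *\<^sub>R A) * A = A * exp (s *\<^sub>R A)"
  proof (cases "s = 0")
    case False
    assume "exp (s *\<^sub>R A) * (s *\<^sub>R A) = (s *\<^sub>R A) * exp (s *\<^sub>R A)"
    hence "s *\<^sub>R (exp (s *\<^sub>R A) * A) = s *\<^sub>R (A * exp (s *\<^sub>R A))" by simp
    with False show ?thesis by simp
  qed simp
  thus ?thesis by (metis ap_mult)
qed


lemma mm_add_r: "((A::real^'m^'n) + B) ** C = A ** C + B ** C"
  by (simp add: matrix_matrix_mult_def vec_eq_iff sum.distrib distrib_right)
lemma mm_add_l: "(A::real^'m^'n) ** (B + C) = A ** B + A ** C"
  by (rule matrix_add_ldistrib)
lemma mm_diff_r: "((A::real^'m^'n) - B) ** C = A ** C - B ** C"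
  by (simp add: matrix_matrix_mult_def vec_eq_iff sum_subtractf left_diff_distrib)
lemma mm_diff_l: "(A::real^'m^'n) ** (B - C) = A ** B - A ** C"
  by (simp add: matrix_matrix_mult_def vec_eq_iff sum_subtractf right_diff_distrib)
lemma mm_neg_r: "(- (A::real^'m^'n)) ** C = - (A ** C)"
  by (simp add: matrix_matrix_mult_def vec_eq_iff sum_negf)
lemma mm_neg_l: "(A::real^'m^'n) ** (- C) = - (A ** C)"
  by (simp add: matrix_matrix_mult_def vec_eq_iff sum_negf)
lemma mm_scale_r: "(r *\<^sub>R (A::real^'m^'n)) ** C = r *\<^sub>R (A ** C)"
  by (rule scalar_matrix_assoc[symmetric])
lemma mm_scale_l: "(A::real^'m^'n) ** (r *\<^sub>R C) = r *\<^sub>R (A ** C)"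
  by (simp add: matrix_scalar_ac scalar_matrix_assoc)

lemmas mm_simps = mm_add_r mm_add_l mm_diff_r mm_diff_l mm_neg_r mm_neg_l mm_scale_r mm_scale_l

lemma tr_add: "transpose ((A::real^'m^'n) + B) = transpose A + transpose B"
  by (simp add: transpose_def vec_eq_iff)
lemma tr_diff: "transpose ((A::real^'m^'n) - B) = transpose A - transpose B"
  by (simp add: transpose_def vec_eq_iff)
lemma tr_neg: "transpose (- (A::real^'m^'n)) = - transpose A"
  by (simp add: transpose_def vec_eq_iff)
lemma tr_zero: "transpose (0::real^'m^'n) = 0"
  by (simp add: transpose_def vec_eq_iff)

lemmas tr_simps = tr_add tr_diff tr_neg tr_zero transpose_scalar matrix_transpose_mul

lemma linear_transpose: "linear (transpose :: real^'m^'n \<Rightarrow> real^'n^'m)"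
  by (rule linearI) (simp_all add: tr_add transpose_scalar)

lemma bounded_linear_transpose: "bounded_linear (transpose :: real^'m^'n \<Rightarrow> real^'n^'m)"
  using linear_transpose linear_conv_bounded_linear by blast

lemma bilinear_mm: "bilinear (\<lambda>(A::real^'m^'n) (B::real^'p^'m). A ** B)"
  unfolding bilinear_def by (auto intro!: linearI simp: mm_simps)

lemma bounded_bilinear_mm: "bounded_bilinear (\<lambda>(A::real^'m^'n) (B::real^'p^'m). A ** B)"
  using bilinear_mm bilinear_conv_bounded_bilinear by blast

lemma trace_scale: "trace (r *\<^sub>R (A::real^'n^'n)) = r * trace A"
  by (simp add: trace_def sum_distrib_left)
lemma trace_neg: "trace (- (A::real^'n^'n)) = - trace A"
  by (simp add: trace_def sum_negf)
lemma trace_transpose: "trace (transpose (A::real^'n^'n)) = trace A"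
  by (simp add: trace_def transpose_def)
lemma trace_zero: "trace (0::real^'n^'n) = 0"
  by (simp add: trace_def)

lemmas trace_simps = trace_add trace_sub trace_scale trace_neg trace_zero

lemma fro_eq: "trace (transpose (A::real^'m^'n) ** A) = (\<Sum>i\<in>UNIV. \<Sum>j\<in>UNIV. (A$j$i)^2)"
  by (simp add: trace_def matrix_matrix_mult_def transpose_def power2_eq_square)

lemma fro_nonneg: "0 \<le> trace (transpose (A::real^'m^'n) ** A)"
  by (simp add: fro_eq sum_nonneg)

lemma fro_zero: "trace (transpose (A::real^'m^'n) ** A) = 0 \<Longrightarrow> A = 0"
proof -
  assume "trace (transpose A ** A) = 0"
  hence "(\<Sum>i\<in>UNIV. \<Sum>j\<in>UNIV. (A$j$i)^2) = 0" by (simp add: fro_eq)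
  hence h1: "(\<Sum>j\<in>UNIV. (A$j$i)^2) = 0" for i
    using sum_nonneg_eq_0_iff[of UNIV "\<lambda>i. \<Sum>j\<in>UNIV. (A$j$i)^2"] by (simp add: sum_nonneg)
  have "(A$j$i)^2 = 0" for i j
    using h1[of i] sum_nonneg_eq_0_iff[of UNIV "\<lambda>j. (A$j$i)^2"] by simp
  thus "A = 0" by (simp add: vec_eq_iff)
qed

lemma skew_sq_zero: "skew (S::real^'n^'n) \<Longrightarrow> trace (S ** S) = 0 \<Longrightarrow> S = 0"
  by (metis fro_zero mm_neg_r neg_equal_0_iff_equal skew_def trace_neg)

lemma trace_cyc3: "trace ((A::real^'n^'n) ** B ** C) = trace (B ** C ** A)"
  by (metis matrix_mul_assoc trace_mul_sym)


lemma ip_sym: "ip a b = ip b a"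
  unfolding ip_def using trace_mul_sym[of "fst a" "fst b"] trace_mul_sym[of "snd a" "snd b"]
  by (simp only:)

lemma ip_add_l: "ip (a + b) c = ip a c + ip b c"
  by (simp add: ip_def mm_simps trace_simps)
lemma ip_diff_l: "ip (a - b) c = ip a c - ip b c"
  by (simp add: ip_def mm_simps trace_simps)
lemma ip_scale_l: "ip (r *\<^sub>R a) c = r * ip a c"
  by (simp add: ip_def mm_simps trace_simps algebra_simps)
lemma ip_neg_l: "ip (- a) c = - ip a c"
  by (simp add: ip_def mm_simps trace_simps)
lemma ip_zero_l: "ip 0 c = 0"
  by (simp add: ip_def trace_simps)
lemma ip_add_r: "ip c (a + b) = ip c a + ip c b"
  by (simp only: ip_sym[of c "a + b"] ip_add_l ip_sym[of a c] ip_sym[of b c])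
lemma ip_diff_r: "ip c (a - b) = ip c a - ip c b"
  by (simp only: ip_sym[of c "a - b"] ip_diff_l ip_sym[of a c] ip_sym[of b c])
lemma ip_scale_r: "ip c (r *\<^sub>R a) = r * ip c a"
  by (simp only: ip_sym[of c "r *\<^sub>R a"] ip_scale_l ip_sym[of a c])
lemma ip_neg_r: "ip c (- a) = - ip c a"
  by (simp only: ip_sym[of c "- a"] ip_neg_l ip_sym[of a c])
lemma ip_zero_r: "ip c 0 = 0"
  by (simp only: ip_sym[of c 0] ip_zero_l)

lemma bounded_bilinear_ip: "bounded_bilinear ip"
proof -
  have "bilinear ip"
    by (simp add: bilinear_def linear_iff ip_add_l ip_add_r ip_scale_l ip_scale_r del: prod.collapse)
  thus ?thesis using bilinear_conv_bounded_bilinear by blast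
qed

lemma ip_ad: "ip (ad a b) c = - ip b (ad a c)"
  by (simp add: ip_def ad_def mm_simps trace_simps matrix_mul_assoc
      trace_cyc3[of "fst a" "fst b" "fst c"] trace_cyc3[of "snd a" "snd b" "snd c"])

lemma ad_add_r: "ad a (b + c) = ad a b + ad a c"
  by (simp add: ad_def mm_simps)
lemma ad_diff_r: "ad a (b - c) = ad a b - ad a c"
  by (simp add: ad_def mm_simps)
lemma ad_scale_r: "ad a (r *\<^sub>R b) = r *\<^sub>R ad a b"
  by (simp add: ad_def mm_simps algebra_simps)
lemma ad_neg_r: "ad a (- b) = - ad a b"
  by (simp add: ad_def mm_simps)
lemma ad_zero_r: "ad a 0 = 0"
  by (simp add: ad_def zero_prod_def)

lemma linear_ad: "linear (ad a)"
  by (rule linearI) (simp_all add: ad_add_r ad_scale_r)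

lemma skew_add: "skew A \<Longrightarrow> skew B \<Longrightarrow> skew (A + B)"
  by (simp add: skew_def tr_simps)
lemma skew_diff: "skew A \<Longrightarrow> skew B \<Longrightarrow> skew (A - B)"
  by (simp add: skew_def tr_simps)
lemma skew_scale: "skew A \<Longrightarrow> skew (r *\<^sub>R A)"
  by (simp add: skew_def tr_simps)
lemma skew_neg: "skew A \<Longrightarrow> skew (- A)"
  by (simp add: skew_def tr_simps)
lemma skew_zero: "skew 0"
  by (simp add: skew_def tr_simps)
lemma skew_conj: "skew S \<Longrightarrow> skew (transpose M ** S ** M)"
proof -
  assume "skew S"
  have "transpose (transpose M ** S ** M) = transpose M ** transpose S ** M"
    by (simp only: matrix_transpose_mul transpose_transpose matrix_mul_assoc)
  also have "\<dots> = - (transpose M ** S ** M)"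
    using \<open>skew S\<close> unfolding skew_def by (simp only: mm_neg_l mm_neg_r)
  finally show ?thesis by (simp only: skew_def)
qed
lemma skew_comm: "skew A \<Longrightarrow> skew B \<Longrightarrow> skew (A ** B - B ** A)"
  by (simp add: skew_def tr_simps mm_simps)

lemma gset_iff: "(a, b) \<in> gset \<longleftrightarrow> skew a \<and> skew b"
  by (simp add: gset_def)

lemma gset_add: "a \<in> gset \<Longrightarrow> b \<in> gset \<Longrightarrow> a + b \<in> gset"
  by (cases a, cases b) (simp add: gset_def skew_add)
lemma gset_diff: "a \<in> gset \<Longrightarrow> b \<in> gset \<Longrightarrow> a - b \<in> gset"
  by (cases a, cases b) (simp add: gset_def skew_diff)
lemma gset_scale: "a \<in> gset \<Longrightarrow> r *\<^sub>R a \<in> gset"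
  by (cases a) (simp add: gset_def skew_scale)
lemma gset_neg: "a \<in> gset \<Longrightarrow> - a \<in> gset"
  by (cases a) (simp add: gset_def skew_neg)
lemma gset_zero: "0 \<in> gset"
  by (simp add: gset_def skew_zero zero_prod_def)

lemma ad_gset: "a \<in> gset \<Longrightarrow> b \<in> gset \<Longrightarrow> ad a b \<in> gset"
  by (cases a, cases b) (simp add: gset_def ad_def skew_comm)


definition Qm :: "real^'k::finite^'n::finite \<Rightarrow> real^'n^'n" where
  "Qm X = mat 1 - X ** transpose X"

definition prj :: "real^'k::finite^'n::finite \<Rightarrow> ('n,'k) gl \<Rightarrow> ('n,'k) gl" where
  "prj X z = (fst z - X ** (2 *\<^sub>R snd z - transpose X ** fst z ** X) ** transpose X
              - Qm X ** fst z ** Qm X,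
              transpose X ** fst z ** X - snd z)"

lemma hset_iff: "(Om, eta) \<in> hset X \<longleftrightarrow> skew Om \<and> skew eta \<and> Om ** X = X ** eta"
  by (simp add: hset_def gset_def)

context
  fixes X :: "real^'k::finite^'n::finite"
  assumes hX: "transpose X ** X = mat 1"
begin

lemma XtX_r: "A ** transpose X ** X = A"
  by (metis hX matrix_mul_assoc matrix_mul_rid)

lemma QX: "Qm X ** X = 0"
proof -
  have "X ** transpose X ** X = X" by (metis hX matrix_mul_assoc matrix_mul_rid)
  thus ?thesis by (simp add: Qm_def mm_diff_r)
qed

lemma QX_r: "A ** Qm X ** X = 0"
  by (metis QX matrix_mul_assoc times0_right)

lemma XtQ: "transpose X ** Qm X = 0"
proof -
  have "transpose X ** X ** transpose X = transpose X" by (simp add: hX)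
  thus ?thesis by (simp add: Qm_def mm_diff_l matrix_mul_assoc)
qed

lemma XtQ_r: "A ** transpose X ** Qm X = 0"
  by (metis XtQ matrix_mul_assoc times0_right)

lemma QQ: "Qm X ** Qm X = Qm X"
proof -
  have "Qm X ** Qm X = Qm X ** mat 1 - Qm X ** X ** transpose X"
    by (simp add: Qm_def mm_diff_l matrix_mul_assoc)
  also have "\<dots> = Qm X" by (simp add: QX)
  finally show ?thesis .
qed

lemma QQ_r: "A ** Qm X ** Qm X = A ** Qm X"
  by (metis QQ matrix_mul_assoc)

lemma Qt: "transpose (Qm X) = Qm X"
  by (simp add: Qm_def tr_simps)

lemma skew_XSXt: "skew S \<Longrightarrow> skew (X ** S ** transpose X)"
  using skew_conj[of S "transpose X"] by simp

lemma skew_QSQ: "skew S \<Longrightarrow> skew (Qm X ** S ** Qm X)"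
  using skew_conj[of S "Qm X"] by (simp add: Qt)

lemma h_decomp:
  assumes "(Om, eta) \<in> hset X"
  shows "Om = X ** eta ** transpose X + Qm X ** Om ** Qm X"
proof -
  have a: "Om ** X = X ** eta" and sO: "skew Om" and se: "skew eta"
    using assms by (auto simp: hset_iff)
  have b: "transpose X ** Om = eta ** transpose X"
  proof -
    have "transpose (Om ** X) = transpose (X ** eta)" using a by simp
    hence "transpose X ** (- Om) = (- eta) ** transpose X"
      using sO se by (simp add: matrix_transpose_mul skew_def)
    thus ?thesis by (simp add: mm_neg_l mm_neg_r)
  qed
  have e: "Qm X ** Om ** Qm X = Om - X ** transpose X ** Om - Om ** X ** transpose X
            + X ** transpose X ** Om ** X ** transpose X"
    by (simp add: Qm_def mm_simps matrix_mul_assoc algebra_simps)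
  have c1: "X ** transpose X ** Om = X ** eta ** transpose X"
    by (metis b matrix_mul_assoc)
  have c2: "Om ** X ** transpose X = X ** eta ** transpose X"
    by (simp add: a)
  have c3: "X ** transpose X ** Om ** X ** transpose X = X ** eta ** transpose X"
    by (simp add: c1 XtX_r)
  show ?thesis using e c1 c2 c3 by simp
qed

lemma hX_elem: "skew eta \<Longrightarrow> (X ** eta ** transpose X, eta) \<in> hset X"
  by (simp add: hset_iff skew_XSXt XtX_r)

lemma hQ_elem: "skew D \<Longrightarrow> (Qm X ** D ** Qm X, 0) \<in> hset X"
  by (simp add: hset_iff skew_QSQ skew_zero QX_r)

lemma pset_char:
  "z \<in> pset X \<longleftrightarrow> z \<in> gset \<and> transpose X ** fst z ** X = 2 *\<^sub>R snd z \<and> Qm X ** fst z ** Qm X = 0"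
proof (cases z)
  case (Pair Om Psi)
  show ?thesis
  proof
    assume zp: "z \<in> pset X"
    hence zg: "z \<in> gset" and orth: "\<And>h. h \<in> hset X \<Longrightarrow> ip z h = 0" by (auto simp: pset_def)
    have sO: "skew Om" and sP: "skew Psi" using zg Pair by (auto simp: gset_def)
    define S where "S = 2 *\<^sub>R Psi - transpose X ** Om ** X"
    have sS: "skew S" unfolding S_def using sO sP skew_conj[of Om X] by (simp add: skew_diff skew_scale)
    have "ip z (X ** S ** transpose X, S) = 0" using orth hX_elem[OF sS] by blast
    moreover have "ip z (X ** S ** transpose X, S) = trace (S ** S)"
    proof -
      have "trace (Om ** (X ** S ** transpose X)) = trace (transpose X ** Om ** X ** S)"
        using trace_mul_sym[of "Om ** X ** S" "transpose X"] by (simp add: matrix_mul_assoc)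
      thus ?thesis unfolding S_def ip_def Pair
        by (simp add: mm_simps trace_simps algebra_simps)
    qed
    ultimately have "S = 0" using skew_sq_zero[OF sS] by simp
    hence c1: "transpose X ** Om ** X = 2 *\<^sub>R Psi" by (simp add: S_def)
    define D where "D = Qm X ** Om ** Qm X"
    have sD: "skew D" unfolding D_def by (rule skew_QSQ[OF sO])
    have DD: "Qm X ** D ** Qm X = D" unfolding D_def by (simp add: matrix_mul_assoc QQ QQ_r)
    have "ip z (D, 0) = 0" using orth hQ_elem[OF sD] DD by metis
    moreover have "ip z (D, 0) = - trace (D ** D)"
    proof -
      have "trace (D ** D) = trace (Qm X ** (Om ** Qm X ** Om ** Qm X))"
        unfolding D_def by (simp add: matrix_mul_assoc QQ_r)
      also have "\<dots> = trace (Om ** Qm X ** Om ** Qm X ** Qm X)"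
        using trace_mul_sym[of "Qm X" "Om ** Qm X ** Om ** Qm X"] by (simp add: matrix_mul_assoc)
      also have "\<dots> = trace (Om ** D)" unfolding D_def by (simp add: matrix_mul_assoc QQ_r)
      finally show ?thesis unfolding ip_def Pair by (simp add: trace_zero)
    qed
    ultimately have "D = 0" using skew_sq_zero[OF sD] by simp
    thus "z \<in> gset \<and> transpose X ** fst z ** X = 2 *\<^sub>R snd z \<and> Qm X ** fst z ** Qm X = 0"
      using zg c1 Pair D_def by simp
  next
    assume "z \<in> gset \<and> transpose X ** fst z ** X = 2 *\<^sub>R snd z \<and> Qm X ** fst z ** Qm X = 0"
    hence zg: "z \<in> gset" and c1: "transpose X ** Om ** X = 2 *\<^sub>R Psi" and c2: "Qm X ** Om ** Qm X = 0"
      using Pair by auto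
    have "ip z h = 0" if hh: "h \<in> hset X" for h
    proof (cases h)
      case (Pair Om' eta)
      have dec: "Om' = X ** eta ** transpose X + Qm X ** Om' ** Qm X"
        using h_decomp hh Pair by blast
      have t1: "trace (Om ** (X ** eta ** transpose X)) = trace (transpose X ** Om ** X ** eta)"
        using trace_mul_sym[of "Om ** X ** eta" "transpose X"] by (simp add: matrix_mul_assoc)
      have t2: "trace (Om ** (Qm X ** Om' ** Qm X)) = trace (Qm X ** Om ** Qm X ** Om')"
        using trace_mul_sym[of "Om ** Qm X ** Om'" "Qm X"] by (simp add: matrix_mul_assoc)
      have "trace (Om ** Om') = trace (Om ** (X ** eta ** transpose X)) + trace (Om ** (Qm X ** Om' ** Qm X))"
        by (subst dec) (simp add: mm_simps trace_simps)
      also have "\<dots> = 2 * trace (Psi ** eta)" using t1 t2 c1 c2 by (simp add: mm_simps trace_simps)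
      finally show ?thesis using \<open>z = (Om, Psi)\<close> Pair by (simp add: ip_def)
    qed
    thus "z \<in> pset X" using zg by (simp add: pset_def)
  qed
qed


lemma ph_zero:
  assumes "z \<in> pset X" "z \<in> hset X" shows "z = 0"
proof (cases z)
  case (Pair Om Psi)
  have c1: "transpose X ** Om ** X = 2 *\<^sub>R Psi" and c2: "Qm X ** Om ** Qm X = 0"
    using assms(1) Pair pset_char by auto
  have "Om = X ** Psi ** transpose X" using h_decomp assms(2) Pair c2 by (metis add.right_neutral)
  hence "transpose X ** Om ** X = Psi" by (simp add: matrix_mul_assoc hX XtX_r)
  with c1 have "Psi + Psi = Psi" by (simp add: scaleR_2)
  hence "Psi = 0" by simp
  with \<open>Om = X ** Psi ** transpose X\<close> have "Om = 0" by simp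
  thus ?thesis using Pair \<open>Psi = 0\<close> by (simp add: zero_prod_def)
qed

lemma hset_add: "a \<in> hset X \<Longrightarrow> b \<in> hset X \<Longrightarrow> a + b \<in> hset X"
  by (cases a, cases b) (simp add: hset_iff skew_add mm_simps)
lemma hset_diff: "a \<in> hset X \<Longrightarrow> b \<in> hset X \<Longrightarrow> a - b \<in> hset X"
  by (cases a, cases b) (simp add: hset_iff skew_diff mm_simps)
lemma hset_scale: "a \<in> hset X \<Longrightarrow> r *\<^sub>R a \<in> hset X"
  by (cases a) (simp add: hset_iff skew_scale mm_simps)

lemma pset_add: "a \<in> pset X \<Longrightarrow> b \<in> pset X \<Longrightarrow> a + b \<in> pset X"
  by (simp add: pset_def gset_add ip_add_l)
lemma pset_diff: "a \<in> pset X \<Longrightarrow> b \<in> pset X \<Longrightarrow> a - b \<in> pset X"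
  by (simp add: pset_def gset_diff ip_diff_l)
lemma pset_scale: "a \<in> pset X \<Longrightarrow> r *\<^sub>R a \<in> pset X"
  by (simp add: pset_def gset_scale ip_scale_l)
lemma pset_neg: "a \<in> pset X \<Longrightarrow> - a \<in> pset X"
  by (simp add: pset_def gset_neg ip_neg_l)
lemma pset_zero: "0 \<in> pset X"
  by (simp add: pset_def gset_zero ip_zero_l)
lemma pset_gset: "a \<in> pset X \<Longrightarrow> a \<in> gset"
  by (simp add: pset_def)
lemma hset_gset: "a \<in> hset X \<Longrightarrow> a \<in> gset"
  by (cases a) (simp add: hset_iff gset_iff)

lemma pset_orth: "a \<in> pset X \<Longrightarrow> h \<in> hset X \<Longrightarrow> ip a h = 0"
  by (simp add: pset_def)

lemma prj_p: assumes "z \<in> gset" shows "prj X z \<in> pset X"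
proof (cases z)
  case (Pair Om Psi)
  have sO: "skew Om" and sP: "skew Psi" using assms Pair by (auto simp: gset_def)
  have sa: "skew (transpose X ** Om ** X)" by (rule skew_conj[OF sO])
  have g: "prj X z \<in> gset" unfolding prj_def Pair gset_iff fst_conv snd_conv
    by (intro conjI skew_diff sO skew_XSXt skew_QSQ sa skew_scale sP)
  have c1: "transpose X ** fst (prj X z) ** X = 2 *\<^sub>R snd (prj X z)"
    unfolding prj_def Pair fst_conv snd_conv
    by (simp add: mm_simps matrix_mul_assoc XtX_r hX XtQ scaleR_2 algebra_simps)
  have c2: "Qm X ** fst (prj X z) ** Qm X = 0"
    unfolding prj_def Pair fst_conv snd_conv
    by (simp add: mm_simps matrix_mul_assoc QX QX_r QQ QQ_r)
  show ?thesis using g c1 c2 pset_char by blast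
qed

lemma prj_h: assumes "z \<in> gset" shows "z - prj X z \<in> hset X"
proof (cases z)
  case (Pair Om Psi)
  have sO: "skew Om" and sP: "skew Psi" using assms Pair by (auto simp: gset_def)
  define S where "S = 2 *\<^sub>R Psi - transpose X ** Om ** X"
  have sS: "skew S" unfolding S_def using sO sP skew_conj[of Om X] by (simp add: skew_diff skew_scale)
  have e: "z - prj X z = (X ** S ** transpose X + Qm X ** Om ** Qm X, S)"
    unfolding prj_def Pair S_def by (simp add: scaleR_2 algebra_simps)
  show ?thesis unfolding e hset_iff
    by (intro conjI skew_add skew_XSXt skew_QSQ sS sO) (simp add: mm_simps XtX_r QX_r)
qed

lemma prj_unique:
  assumes "z \<in> gset" "q \<in> pset X" "z - q \<in> hset X" shows "q = prj X z"
proof -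
  have "q - prj X z \<in> pset X" using pset_diff assms prj_p by blast
  moreover have "q - prj X z = (z - prj X z) - (z - q)" by simp
  hence "q - prj X z \<in> hset X" using hset_diff prj_h assms by metis
  ultimately show ?thesis using ph_zero by fastforce
qed

lemma pr_p_eq: "z \<in> gset \<Longrightarrow> pr_p X z = prj X z"
  unfolding pr_p_def by (rule the_equality) (auto simp: prj_p prj_h prj_unique)

lemma ip_prj: assumes "z \<in> gset" "v \<in> pset X" shows "ip (prj X z) v = ip z v"
proof -
  have "ip (z - prj X z) v = 0" using pset_orth[OF assms(2) prj_h[OF assms(1)]] ip_sym by metis
  thus ?thesis by (simp add: ip_diff_l)
qed

lemma prj_add: "prj X (a + b) = prj X a + prj X b"
  by (simp add: prj_def mm_simps algebra_simps)
lemma prj_scale: "prj X (r *\<^sub>R a) = r *\<^sub>R prj X a"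
  by (simp add: prj_def mm_simps algebra_simps)
lemma linear_prj: "linear (prj X)"
  by (rule linearI) (simp_all add: prj_add prj_scale)


lemma p_pos_aux:
  assumes "z \<in> pset X"
  shows "ip z z = 2 * trace (transpose (snd z) ** snd z)
                 + 2 * trace (transpose (Qm X ** fst z ** X) ** (Qm X ** fst z ** X))"
    and "trace (fst z ** fst z) = 4 * trace (snd z ** snd z)
                 - 2 * trace (transpose (Qm X ** fst z ** X) ** (Qm X ** fst z ** X))"
proof -
  obtain Om Psi where Pair: "z = (Om, Psi)" by (cases z)
  have c1: "transpose X ** Om ** X = 2 *\<^sub>R Psi" and c2: "Qm X ** Om ** Qm X = 0"
    and zg: "z \<in> gset" using assms Pair pset_char by auto
  have sO: "skew Om" and sP: "skew Psi" using zg Pair by (auto simp: gset_def)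
  have I: "X ** transpose X + Qm X = mat 1" by (simp add: Qm_def)
  define C where "C = Qm X ** Om ** X"
  define T where "T = trace (transpose X ** Om ** Qm X ** Om ** X)"
  have split1: "Om ** Om = Om ** X ** transpose X ** Om + Om ** Qm X ** Om"
  proof -
    have "Om ** Om = Om ** (X ** transpose X + Qm X) ** Om" by (simp add: I)
    thus ?thesis by (simp add: mm_simps matrix_mul_assoc)
  qed
  have tA: "trace (Om ** X ** transpose X ** Om) = 4 * trace (Psi ** Psi) + T"
  proof -
    have "trace (Om ** X ** transpose X ** Om) = trace (transpose X ** Om ** Om ** X)"
      using trace_mul_sym[of "Om ** X" "transpose X ** Om"] by (simp add: matrix_mul_assoc)
    also have "transpose X ** Om ** Om ** X = transpose X ** Om ** (X ** transpose X + Qm X) ** Om ** X"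
      by (simp add: I)
    also have "\<dots> = (transpose X ** Om ** X) ** (transpose X ** Om ** X) + transpose X ** Om ** Qm X ** Om ** X"
      by (simp add: mm_simps matrix_mul_assoc)
    finally show ?thesis unfolding T_def c1 by (simp add: mm_simps trace_simps)
  qed
  have tB: "trace (Om ** Qm X ** Om) = T"
  proof -
    have "Om ** Qm X ** Om = Om ** Qm X ** Om ** (X ** transpose X + Qm X)" by (simp add: I)
    hence "Om ** Qm X ** Om = Om ** Qm X ** Om ** X ** transpose X + Om ** Qm X ** Om ** Qm X"
      by (simp add: mm_simps matrix_mul_assoc)
    hence "trace (Om ** Qm X ** Om) = trace (Om ** Qm X ** Om ** X ** transpose X + Om ** Qm X ** Om ** Qm X)"
      by (rule arg_cong[where f=trace])
    hence "trace (Om ** Qm X ** Om) = trace (Om ** Qm X ** Om ** X ** transpose X) + trace (Om ** Qm X ** Om ** Qm X)"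
      by (simp only: trace_add)
    moreover have "trace (Om ** Qm X ** Om ** X ** transpose X) = T"
      unfolding T_def using trace_mul_sym[of "Om ** Qm X ** Om ** X" "transpose X"] by (simp add: matrix_mul_assoc)
    moreover have "trace (Om ** Qm X ** Om ** Qm X) = 0"
      using trace_mul_sym[of "Om ** Qm X ** Om" "Qm X"] by (simp add: matrix_mul_assoc c2 trace_zero)
    ultimately show ?thesis by simp
  qed
  have tC: "trace (transpose C ** C) = - T"
  proof -
    have "transpose C = - (transpose X ** Om ** Qm X)"
      unfolding C_def using sO by (simp add: tr_simps Qt skew_def mm_simps matrix_mul_assoc)
    hence "transpose C ** C = - (transpose X ** Om ** Qm X ** Om ** X)"
      unfolding C_def by (simp add: mm_simps matrix_mul_assoc QQ_r)
    thus ?thesis unfolding T_def by (simp add: trace_simps)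
  qed
  have tP: "trace (Psi ** Psi) = - trace (transpose Psi ** Psi)"
    using sP by (simp add: skew_def mm_simps trace_simps)
  have key: "trace (Om ** Om) = 4 * trace (Psi ** Psi) - 2 * trace (transpose C ** C)"
    using split1 tA tB tC by (simp add: trace_simps)
  show "trace (fst z ** fst z) = 4 * trace (snd z ** snd z)
                 - 2 * trace (transpose (Qm X ** fst z ** X) ** (Qm X ** fst z ** X))"
    using key Pair C_def by simp
  show "ip z z = 2 * trace (transpose (snd z) ** snd z)
                 + 2 * trace (transpose (Qm X ** fst z ** X) ** (Qm X ** fst z ** X))"
    using key tP Pair C_def by (simp add: ip_def)
qed

lemma p_pos: "z \<in> pset X \<Longrightarrow> 0 \<le> ip z z"
  using p_pos_aux(1)[of z] fro_nonneg[of "snd z"] fro_nonneg[of "Qm X ** fst z ** X"] by simp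

lemma p_def: assumes "z \<in> pset X" "ip z z = 0" shows "z = 0"
proof -
  let ?a = "trace (transpose (snd z) ** snd z)"
  let ?b = "trace (transpose (Qm X ** fst z ** X) ** (Qm X ** fst z ** X))"
  have "?a = 0" "?b = 0" using p_pos_aux(1)[OF assms(1)] assms(2)
      fro_nonneg[of "snd z"] fro_nonneg[of "Qm X ** fst z ** X"] by linarith+
  hence s0: "snd z = 0" and "Qm X ** fst z ** X = 0" using fro_zero by blast+
  hence "trace (fst z ** fst z) = 0" using p_pos_aux(2)[OF assms(1)] \<open>?b = 0\<close> by (simp add: trace_zero)
  moreover have "skew (fst z)" using pset_gset[OF assms(1)] by (cases z) (simp add: gset_def)
  ultimately have "fst z = 0" using skew_sq_zero by blast
  thus ?thesis using s0 by (simp add: prod_eq_iff)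
qed

end


lemma bl_mm_left: "bounded_linear (\<lambda>A::real^'m^'n. A ** (B::real^'p^'m))"
  by (rule bounded_bilinear.bounded_linear_left[OF bounded_bilinear_mm])
lemma bl_mm_right: "bounded_linear (\<lambda>B::real^'p^'m. (A::real^'m^'n) ** B)"
  by (rule bounded_bilinear.bounded_linear_right[OF bounded_bilinear_mm])

definition Lm :: "real^'m::finite^'m \<Rightarrow> (real^'m^'m) endo" where
  "Lm M = mk (\<lambda>Y. M ** Y)"

lemma ap_Lm: "ap (Lm M) Y = M ** Y"
  unfolding Lm_def by (rule ap_mk[OF bl_mm_right])

lemma ap_pow_Lm: "ap ((t *\<^sub>R Lm M) ^ m) Y = mpow (t *\<^sub>R M) m ** Y"
proof (induction m arbitrary: Y)
  case 0
  show ?case by simp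
next
  case (Suc m)
  have "ap ((t *\<^sub>R Lm M) ^ Suc m) Y = ap (t *\<^sub>R Lm M) (ap ((t *\<^sub>R Lm M) ^ m) Y)"
    by (simp only: power_Suc ap_mult)
  also have "\<dots> = t *\<^sub>R (M ** (mpow (t *\<^sub>R M) m ** Y))"
    by (simp only: Suc ap_scaleR ap_Lm)
  also have "\<dots> = mpow (t *\<^sub>R M) (Suc m) ** Y"
    by (simp add: mm_simps matrix_mul_assoc)
  finally show ?case .
qed

lemma mexp_sums: "(\<lambda>m. (1 / fact m) *\<^sub>R mpow (t *\<^sub>R M) m) sums mexp (t *\<^sub>R M)"
proof -
  have "(\<lambda>m. (1 / fact m) *\<^sub>R mpow (t *\<^sub>R M) m) sums ap (exp (t *\<^sub>R Lm M)) (mat 1)"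
    using exp_ap_sums[of "t *\<^sub>R Lm M" "mat 1"] by (simp only: ap_pow_Lm matrix_mul_rid)
  thus ?thesis unfolding mexp_def by (simp add: sums_iff)
qed

lemma mexp_mult: "mexp (t *\<^sub>R M) ** Y = ap (exp (t *\<^sub>R Lm M)) Y"
proof -
  have a: "(\<lambda>m. (1 / fact m) *\<^sub>R mpow (t *\<^sub>R M) m ** Y) sums (mexp (t *\<^sub>R M) ** Y)"
    using bounded_linear.sums[OF bl_mm_left mexp_sums] by (simp add: mm_scale_r)
  have b: "(\<lambda>m. (1 / fact m) *\<^sub>R mpow (t *\<^sub>R M) m ** Y) sums ap (exp (t *\<^sub>R Lm M)) Y"
    using exp_ap_sums[of "t *\<^sub>R Lm M" Y] by (simp only: ap_pow_Lm mm_scale_r)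
  show ?thesis using a b sums_unique2 by blast
qed

lemma mexp_zero: "mexp (0 *\<^sub>R M) = mat 1"
  using mexp_mult[of 0 M "mat 1"] by simp

lemma mexp_deriv: "((\<lambda>t. mexp (t *\<^sub>R M)) has_vector_derivative mexp (t *\<^sub>R M) ** M) (at t)"
proof -
  have "((\<lambda>t. ap (exp (t *\<^sub>R Lm M)) (mat 1)) has_vector_derivative ap (exp (t *\<^sub>R Lm M)) (ap (Lm M) (mat 1))) (at t)"
    by (rule exp_ap_deriv')
  thus ?thesis by (simp add: mexp_mult[symmetric] ap_Lm)
qed

lemma mexp_inv: "mexp ((- t) *\<^sub>R M) ** mexp (t *\<^sub>R M) = mat 1"
proof -
  have e1: "mexp (t *\<^sub>R M) = ap (exp (t *\<^sub>R Lm M)) (mat 1)"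
    using mexp_mult[of t M "mat 1"] by (simp only: matrix_mul_rid)
  have "mexp ((- t) *\<^sub>R M) ** mexp (t *\<^sub>R M) = ap (exp ((- t) *\<^sub>R Lm M)) (mexp (t *\<^sub>R M))"
    by (rule mexp_mult)
  also have "\<dots> = ap (exp ((- t) *\<^sub>R Lm M)) (ap (exp (t *\<^sub>R Lm M)) (mat 1))"
    by (simp only: e1)
  also have "ap (exp ((- t) *\<^sub>R Lm M)) (ap (exp (t *\<^sub>R Lm M)) (mat 1)) = mat 1"
    using exp_ap_inv[of "- t" "Lm M" "mat 1"] by (simp only: minus_minus)
  finally show ?thesis .
qed


lemma mpow_comm: "mpow A m ** A = A ** mpow A m"
  by (induction m) (simp_all add: matrix_mul_assoc[symmetric])

lemma mpow_transpose: "transpose (mpow A m) = mpow (transpose A) m"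
  by (induction m) (simp_all add: matrix_transpose_mul mpow_comm)

lemma mexp_transpose: assumes "skew M" shows "transpose (mexp (t *\<^sub>R M)) = mexp ((- t) *\<^sub>R M)"
proof -
  have a: "(\<lambda>m. (1 / fact m) *\<^sub>R transpose (mpow (t *\<^sub>R M) m)) sums transpose (mexp (t *\<^sub>R M))"
    using bounded_linear.sums[OF bounded_linear_transpose mexp_sums] by (simp add: transpose_scalar)
  have tM: "transpose (t *\<^sub>R M) = (- t) *\<^sub>R M" using assms by (simp add: skew_def transpose_scalar)
  have "transpose (mpow (t *\<^sub>R M) m) = mpow ((- t) *\<^sub>R M) m" for m by (simp only: mpow_transpose tM)
  with a have "(\<lambda>m. (1 / fact m) *\<^sub>R mpow ((- t) *\<^sub>R M) m) sums transpose (mexp (t *\<^sub>R M))" by (simp only:)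
  thus ?thesis using mexp_sums sums_unique2 by blast
qed

lemma mexp_orth1: assumes "skew M" shows "transpose (mexp (t *\<^sub>R M)) ** mexp (t *\<^sub>R M) = mat 1"
  using mexp_inv[of t M] by (simp only: mexp_transpose[OF assms])

lemma mexp_orth2: "skew M \<Longrightarrow> mexp (t *\<^sub>R M) ** transpose (mexp (t *\<^sub>R M)) = mat 1"
  using mexp_orth1 matrix_left_right_inverse by blast

lemma mexp_intertwine:
  assumes "Om ** X = X ** eta"
  shows "mexp (t *\<^sub>R Om) ** X = X ** mexp (t *\<^sub>R eta)"
proof -
  have p: "mpow (t *\<^sub>R Om) m ** X = X ** mpow (t *\<^sub>R eta) m" for m
  proof (induction m)
    case (Suc m)
    have "mpow (t *\<^sub>R Om) (Suc m) ** X = t *\<^sub>R (Om ** (mpow (t *\<^sub>R Om) m ** X))"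
      by (simp add: mm_simps matrix_mul_assoc)
    also have "\<dots> = t *\<^sub>R (Om ** X ** mpow (t *\<^sub>R eta) m)" by (simp add: Suc matrix_mul_assoc)
    also have "\<dots> = X ** mpow (t *\<^sub>R eta) (Suc m)" by (simp add: assms mm_simps matrix_mul_assoc)
    finally show ?case .
  qed simp
  have a: "(\<lambda>m. (1 / fact m) *\<^sub>R mpow (t *\<^sub>R Om) m ** X) sums (mexp (t *\<^sub>R Om) ** X)"
    using bounded_linear.sums[OF bl_mm_left mexp_sums] by (simp add: mm_scale_r)
  have b: "(\<lambda>m. (1 / fact m) *\<^sub>R (X ** mpow (t *\<^sub>R eta) m)) sums (X ** mexp (t *\<^sub>R eta))"
    using bounded_linear.sums[OF bl_mm_right mexp_sums] by (simp add: mm_scale_l)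
  have a': "(\<lambda>m. (1 / fact m) *\<^sub>R (X ** mpow (t *\<^sub>R eta) m)) sums (mexp (t *\<^sub>R Om) ** X)"
    using a by (simp only: mm_scale_r p)
  show ?thesis by (rule sums_unique2[OF a' b])
qed

lemma matrix_inv_orth:
  fixes A :: "real^'m^'m"
  assumes "transpose A ** A = mat 1"
  shows "matrix_inv A = transpose A"
proof -
  have r: "A ** transpose A = mat 1" using assms matrix_left_right_inverse by blast
  have u: "B = transpose A" if "A ** B = mat 1 \<and> B ** A = mat 1" for B
  proof -
    have "B = (transpose A ** A) ** B" by (simp add: assms)
    also have "\<dots> = transpose A" using that by (simp add: matrix_mul_assoc[symmetric])
    finally show ?thesis .
  qed
  show ?thesis unfolding matrix_inv_def
  proof (rule someI2[where a="transpose A"])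
    show "A ** transpose A = mat 1 \<and> transpose A ** A = mat 1" using r assms by (simp only: simp_thms)
  next
    fix B assume "A ** B = mat 1 \<and> B ** A = mat 1" thus "B = transpose A" by (rule u)
  qed
qed


definition AdT :: "(real^'n::finite^'n) \<times> (real^'k::finite^'k) \<Rightarrow> ('n,'k) gl \<Rightarrow> ('n,'k) gl" where
  "AdT g b = (fst g ** fst b ** transpose (fst g), snd g ** snd b ** transpose (snd g))"

definition ginv :: "(real^'n::finite^'n) \<times> (real^'k::finite^'k) \<Rightarrow> (real^'n^'n) \<times> (real^'k^'k)" where
  "ginv g = (transpose (fst g), transpose (snd g))"

definition good :: "real^'k::finite^'n::finite \<Rightarrow> (real^'n^'n) \<times> (real^'k^'k) \<Rightarrow> bool" where
  "good X g \<longleftrightarrow> transpose (fst g) ** fst g = mat 1 \<and> transpose (snd g) ** snd g = mat 1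
      \<and> fst g ** X = X ** snd g"

lemma AdT_add: "AdT g (a + b) = AdT g a + AdT g b"
  by (simp add: AdT_def mm_simps)
lemma AdT_diff: "AdT g (a - b) = AdT g a - AdT g b"
  by (simp add: AdT_def mm_simps)
lemma AdT_scale: "AdT g (r *\<^sub>R a) = r *\<^sub>R AdT g a"
  by (simp add: AdT_def mm_simps)
lemma AdT_neg: "AdT g (- a) = - AdT g a"
  by (simp add: AdT_def mm_simps)

lemma AdT_one: "AdT (mat 1, mat 1) b = b"
  by (simp add: AdT_def)

lemma skew_conjT: "skew S \<Longrightarrow> skew (M ** S ** transpose M)"
  using skew_conj[of S "transpose M"] by simp

lemma AdT_gset: "a \<in> gset \<Longrightarrow> AdT g a \<in> gset"
  by (cases a) (simp add: AdT_def gset_iff skew_conjT)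

lemma orth_r: "transpose E ** E = mat 1 \<Longrightarrow> A ** transpose E ** E = A"
  by (metis matrix_mul_assoc matrix_mul_rid)

lemma orth': "transpose (E::real^'m^'m) ** E = mat 1 \<Longrightarrow> E ** transpose E = mat 1"
  using matrix_left_right_inverse by blast

lemma orth'_r: "transpose (E::real^'m^'m) ** E = mat 1 \<Longrightarrow> A ** E ** transpose E = A"
  by (metis orth' matrix_mul_assoc matrix_mul_rid)

lemma trace_conj: "transpose (E::real^'m^'m) ** E = mat 1 \<Longrightarrow> trace (E ** C ** transpose E) = trace C"
  using trace_mul_sym[of "E ** C" "transpose E"] by (simp add: matrix_mul_assoc)

lemma good_inv: "good X g \<Longrightarrow> good X (ginv g)"
proof -
  assume gg: "good X g"
  hence o1: "transpose (fst g) ** fst g = mat 1" and o2: "transpose (snd g) ** snd g = mat 1"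
    and i: "fst g ** X = X ** snd g" by (auto simp: good_def)
  have "transpose (fst g) ** X = transpose (fst g) ** X ** (snd g ** transpose (snd g))"
    using orth'[OF o2] by simp
  also have "\<dots> = transpose (fst g) ** (fst g ** X) ** transpose (snd g)"
    by (simp add: i matrix_mul_assoc)
  also have "\<dots> = X ** transpose (snd g)" by (simp add: matrix_mul_assoc o1)
  finally show ?thesis using orth'[OF o1] orth'[OF o2] by (simp add: good_def ginv_def)
qed

lemma ginv_ginv: "ginv (ginv g) = g"
  by (simp add: ginv_def)

context
  fixes X :: "real^'k::finite^'n::finite" and g
  assumes hX: "transpose X ** X = mat 1" and gg: "good X g"
begin

lemma o1: "transpose (fst g) ** fst g = mat 1" using gg by (simp add: good_def)
lemma o2: "transpose (snd g) ** snd g = mat 1" using gg by (simp add: good_def)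
lemma itw: "fst g ** X = X ** snd g" using gg by (simp add: good_def)
lemma itw': "transpose (fst g) ** X = X ** transpose (snd g)"
  using good_inv[OF gg] by (simp add: good_def ginv_def)

lemma AdT_ip: "ip (AdT g a) (AdT g b) = ip a b"
proof -
  have f: "fst g ** fst a ** transpose (fst g) ** (fst g ** fst b ** transpose (fst g))
         = fst g ** (fst a ** fst b) ** transpose (fst g)"
    by (simp add: matrix_mul_assoc orth_r[OF o1])
  have s: "snd g ** snd a ** transpose (snd g) ** (snd g ** snd b ** transpose (snd g))
         = snd g ** (snd a ** snd b) ** transpose (snd g)"
    by (simp add: matrix_mul_assoc orth_r[OF o2])
  show ?thesis unfolding ip_def AdT_def fst_conv snd_conv f s
    by (simp add: trace_conj[OF o1] trace_conj[OF o2])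
qed

lemma AdT_ad: "AdT g (ad a b) = ad (AdT g a) (AdT g b)"
  by (simp add: AdT_def ad_def mm_simps matrix_mul_assoc orth_r[OF o1] orth_r[OF o2])

lemma AdT_inv: "AdT g (AdT (ginv g) b) = b"
  by (simp add: AdT_def ginv_def matrix_mul_assoc orth'_r[OF o1] orth'_r[OF o2] orth'[OF o1] orth'[OF o2])

lemma AdT_inv': "AdT (ginv g) (AdT g b) = b"
  by (simp add: AdT_def ginv_def matrix_mul_assoc orth_r[OF o1] orth_r[OF o2] o1 o2)

lemma AdT_hset: "h \<in> hset X \<Longrightarrow> AdT g h \<in> hset X"
proof (cases h)
  case (Pair Om eta)
  assume hh: "h \<in> hset X"
  hence sO: "skew Om" and se: "skew eta" and a: "Om ** X = X ** eta" using Pair by (auto simp: hset_iff)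
  have "fst g ** Om ** transpose (fst g) ** X = fst g ** Om ** (transpose (fst g) ** X)"
    by (simp add: matrix_mul_assoc)
  also have "\<dots> = fst g ** (Om ** X) ** transpose (snd g)" by (simp add: itw' matrix_mul_assoc)
  also have "\<dots> = (fst g ** X) ** eta ** transpose (snd g)" by (simp add: a matrix_mul_assoc)
  also have "\<dots> = X ** (snd g ** eta ** transpose (snd g))" by (simp add: itw matrix_mul_assoc)
  finally show ?thesis using Pair sO se by (simp add: AdT_def hset_iff skew_conjT)
qed

end

lemma AdT_pset:
  assumes hX: "transpose X ** X = mat 1" and gg: "good X g" and q: "q \<in> pset X"
  shows "AdT g q \<in> pset X"
proof -
  have "ip (AdT g q) h = 0" if "h \<in> hset X" for h
  proof -
    have "ip (AdT g q) h = ip (AdT g q) (AdT g (AdT (ginv g) h))" by (simp add: AdT_inv[OF hX gg])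
    also have "\<dots> = ip q (AdT (ginv g) h)" by (rule AdT_ip[OF hX gg])
    also have "\<dots> = 0" using pset_orth[OF hX q AdT_hset[OF hX good_inv[OF gg] that]] .
    finally show ?thesis .
  qed
  thus ?thesis using q by (simp add: pset_def AdT_gset)
qed

lemma AdT_prj:
  assumes hX: "transpose X ** X = mat 1" and gg: "good X g" and z: "z \<in> gset"
  shows "prj X (AdT g z) = AdT g (prj X z)"
proof -
  have "AdT g z - AdT g (prj X z) = AdT g (z - prj X z)" by (simp add: AdT_diff)
  hence "AdT g z - AdT g (prj X z) \<in> hset X" using AdT_hset[OF hX gg prj_h[OF hX z]] by simp
  thus ?thesis using prj_unique[OF hX AdT_gset[OF z] AdT_pset[OF hX gg prj_p[OF hX z]]] by simp
qed


lemma ad_hset: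
  assumes "a \<in> hset X" "b \<in> hset X" shows "ad a b \<in> hset X"
proof (cases a, cases b)
  fix Oa ea Ob eb assume A: "a = (Oa, ea)" and B: "b = (Ob, eb)"
  have sa: "skew Oa" "skew ea" and ia: "Oa ** X = X ** ea" using assms(1) A by (auto simp: hset_iff)
  have sb: "skew Ob" "skew eb" and ib: "Ob ** X = X ** eb" using assms(2) B by (auto simp: hset_iff)
  have 1: "Oa ** Ob ** X = X ** (ea ** eb)" by (metis matrix_mul_assoc ia ib)
  have 2: "Ob ** Oa ** X = X ** (eb ** ea)" by (metis matrix_mul_assoc ia ib)
  show ?thesis unfolding A B ad_def fst_conv snd_conv hset_iff
    using sa sb 1 2 by (simp add: skew_comm mm_simps)
qed

lemma ad_h_p:
  assumes hX: "transpose X ** X = mat 1" and h: "h \<in> hset X" and w: "w \<in> pset X"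
  shows "ad h w \<in> pset X"
proof -
  have g: "ad h w \<in> gset" using ad_gset hset_gset pset_gset h w hX by blast
  have "ip (ad h w) h' = 0" if "h' \<in> hset X" for h'
    using ip_ad[of h w h'] pset_orth[OF hX w ad_hset[OF h that]] by simp
  thus ?thesis using g by (simp add: pset_def)
qed

definition hx :: "real^'k::finite^'n::finite \<Rightarrow> ('n,'k) gl \<Rightarrow> ('n,'k) gl" where
  "hx X xi = xi - prj X xi"
definition px :: "real^'k::finite^'n::finite \<Rightarrow> ('n,'k) gl \<Rightarrow> ('n,'k) gl" where
  "px X xi = prj X xi"
definition Bop :: "real^'k::finite^'n::finite \<Rightarrow> ('n,'k) gl \<Rightarrow> ('n,'k) gl \<Rightarrow> ('n,'k) gl" where
  "Bop X xi w = ad (hx X xi) w + (1/2) *\<^sub>R prj X (ad (px X xi) w)"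
definition LB :: "real^'k::finite^'n::finite \<Rightarrow> ('n,'k) gl \<Rightarrow> ('n,'k) gl endo" where
  "LB X xi = mk (Bop X xi)"
definition Wt :: "real^'k::finite^'n::finite \<Rightarrow> ('n,'k) gl \<Rightarrow> real \<Rightarrow> ('n,'k) gl \<Rightarrow> ('n,'k) gl" where
  "Wt X xi t v = ap (exp (t *\<^sub>R (- LB X xi))) v"
definition gt :: "real^'k::finite^'n::finite \<Rightarrow> ('n,'k) gl \<Rightarrow> real \<Rightarrow> (real^'n^'n) \<times> (real^'k^'k)" where
  "gt X xi t = (mexp (t *\<^sub>R fst (hx X xi)), mexp (t *\<^sub>R snd (hx X xi)))"
definition Sp :: "real^'k::finite^'n::finite \<Rightarrow> ('n,'k) gl \<Rightarrow> real \<Rightarrow> ('n,'k) gl \<Rightarrow> ('n,'k) gl" where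
  "Sp X xi t v = AdT (gt X xi t) (Wt X xi t v)"

lemma iter_agree:
  assumes "\<And>w. w \<in> S \<Longrightarrow> f w = g w" "\<And>w. w \<in> S \<Longrightarrow> g w \<in> S" "v \<in> S"
  shows "(f ^^ m) v = (g ^^ m) v \<and> (g ^^ m) v \<in> S"
  by (induction m) (auto simp: assms)

context
  fixes X :: "real^'k::finite^'n::finite" and xi :: "('n,'k) gl"
  assumes hX: "transpose X ** X = mat 1" and hxi: "xi \<in> gset"
begin

lemma comp_h_eq: "comp_h X xi = hx X xi"
  by (simp add: comp_h_def hx_def pr_p_eq[OF hX hxi])
lemma comp_p_eq: "comp_p X xi = px X xi"
  by (simp add: comp_p_def px_def pr_p_eq[OF hX hxi])

lemma hx_h: "hx X xi \<in> hset X" unfolding hx_def by (rule prj_h[OF hX hxi])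
lemma px_p: "px X xi \<in> pset X" unfolding px_def by (rule prj_p[OF hX hxi])

lemma hx_parts: "skew (fst (hx X xi))" "skew (snd (hx X xi))" "fst (hx X xi) ** X = X ** snd (hx X xi)"
  using hx_h by (cases "hx X xi"; simp add: hset_iff)+

lemma good_gt: "good X (gt X xi t)"
  unfolding good_def gt_def fst_conv snd_conv
  using mexp_orth1[OF hx_parts(1)] mexp_orth1[OF hx_parts(2)] mexp_intertwine[OF hx_parts(3)]
  by simp

lemma Ad_eq: "Ad (gexp (t *\<^sub>R hx X xi)) b = AdT (gt X xi t) b"
  using good_gt[of t] unfolding Ad_def gexp_def AdT_def gt_def good_def
  by (simp add: matrix_inv_orth)

lemma Bop_add: "Bop X xi (a + b) = Bop X xi a + Bop X xi b"
  by (simp add: Bop_def ad_add_r prj_add[OF hX] algebra_simps)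
lemma Bop_scale: "Bop X xi (r *\<^sub>R a) = r *\<^sub>R Bop X xi a"
  by (simp add: Bop_def ad_scale_r prj_scale[OF hX] algebra_simps)

lemma bl_Bop: "bounded_linear (Bop X xi)"
proof -
  have "linear (Bop X xi)" by (rule linearI) (simp_all add: Bop_add Bop_scale)
  thus ?thesis using linear_conv_bounded_linear by blast
qed

lemma ap_LB: "ap (LB X xi) w = Bop X xi w"
  unfolding LB_def by (rule ap_mk[OF bl_Bop])

lemma Bop_pset: "w \<in> pset X \<Longrightarrow> Bop X xi w \<in> pset X"
  unfolding Bop_def
  by (intro pset_add[OF hX] pset_scale[OF hX] ad_h_p[OF hX hx_h] prj_p[OF hX]
      ad_gset pset_gset[OF hX] px_p)

lemma Bop_skew:
  assumes u: "u \<in> pset X" and w: "w \<in> pset X"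
  shows "ip (Bop X xi u) w = - ip u (Bop X xi w)"
proof -
  have gu: "ad (px X xi) u \<in> gset" and gw: "ad (px X xi) w \<in> gset"
    using ad_gset pset_gset[OF hX] px_p u w by blast+
  have 1: "ip (prj X (ad (px X xi) u)) w = - ip u (ad (px X xi) w)"
    using ip_prj[OF hX gu w] ip_ad by simp
  have 2: "ip u (prj X (ad (px X xi) w)) = ip u (ad (px X xi) w)"
    using ip_prj[OF hX gw u] ip_sym by metis
  show ?thesis unfolding Bop_def
    by (simp add: ip_add_l ip_add_r ip_scale_l ip_scale_r 1 2 ip_ad)
qed

end


context
  fixes X :: "real^'k::finite^'n::finite" and xi :: "('n,'k) gl"
  assumes hX: "transpose X ** X = mat 1" and hxi: "xi \<in> gset"
begin

lemma ap_nLB: "ap (t *\<^sub>R (- LB X xi)) w = (- t) *\<^sub>R Bop X xi w"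
  by (simp add: ap_scaleR ap_uminus ap_LB[OF hX hxi])

lemma subspace_pset: "subspace (pset X)"
  by (auto simp: subspace_def pset_zero[OF hX] pset_add[OF hX] pset_scale[OF hX])

lemma Wt_pset: assumes v: "v \<in> pset X" shows "Wt X xi t v \<in> pset X"
proof -
  let ?A = "t *\<^sub>R (- LB X xi)"
  have it: "((ap ?A) ^^ m) v \<in> pset X" for m
  proof (induction m)
    case 0 show ?case using v by simp
  next
    case (Suc m)
    have e: "((ap ?A) ^^ Suc m) v = (- t) *\<^sub>R Bop X xi (((ap ?A) ^^ m) v)"
      by (simp only: funpow.simps comp_apply ap_nLB)
    show ?case unfolding e by (rule pset_scale[OF hX Bop_pset[OF hX hxi Suc.IH]])
  qed
  have trm: "(1 / fact m) *\<^sub>R ap (?A ^ m) v \<in> pset X" for m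
    unfolding ap_pow by (rule pset_scale[OF hX it])
  have L: "(\<lambda>n. \<Sum>m<n. (1 / fact m) *\<^sub>R ap (?A ^ m) v) \<longlonglongrightarrow> Wt X xi t v"
    using exp_ap_sums[of ?A v] unfolding Wt_def sums_def .
  have M: "(\<Sum>m<n. (1 / fact m) *\<^sub>R ap (?A ^ m) v) \<in> pset X" for n
    by (rule subspace_sum[OF subspace_pset trm])
  show ?thesis by (rule closed_sequentially[OF closed_subspace[OF subspace_pset] M L])
qed

lemma Wt_deriv: "((\<lambda>s. Wt X xi s v) has_vector_derivative - Bop X xi (Wt X xi t v)) (at t)"
  using exp_ap_deriv[of "- LB X xi" v t] unfolding Wt_def
  by (simp add: ap_uminus ap_LB[OF hX hxi])

lemma Wt_inv: "Wt X xi t (Wt X xi (- t) v) = v"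
  unfolding Wt_def by (rule exp_ap_inv)

lemma Wt_inv': "Wt X xi (- t) (Wt X xi t v) = v"
  unfolding Wt_def using exp_ap_inv[of "- t" "- LB X xi" v] by simp

lemma Wt_add: "Wt X xi t (u + v) = Wt X xi t u + Wt X xi t v"
  unfolding Wt_def by (rule ap_add_right)
lemma Wt_scale: "Wt X xi t (r *\<^sub>R v) = r *\<^sub>R Wt X xi t v"
  unfolding Wt_def by (rule ap_scaleR_right)
lemma Wt_diff: "Wt X xi t (u - v) = Wt X xi t u - Wt X xi t v"
  unfolding Wt_def by (rule ap_diff_right)
lemma Wt_zero: "Wt X xi 0 v = v"
  unfolding Wt_def by simp

lemma Wt_iso:
  assumes u: "u \<in> pset X" and v: "v \<in> pset X"
  shows "ip (Wt X xi t u) (Wt X xi t v) = ip u v"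
proof -
  let ?f = "\<lambda>s. ip (Wt X xi s u) (Wt X xi s v)"
  have "(?f has_derivative (\<lambda>h. 0)) (at s)" for s
  proof -
    have d: "(?f has_vector_derivative
        (ip (Wt X xi s u) (- Bop X xi (Wt X xi s v)) + ip (- Bop X xi (Wt X xi s u)) (Wt X xi s v))) (at s)"
      by (rule bounded_bilinear.has_vector_derivative[OF bounded_bilinear_ip Wt_deriv Wt_deriv])
    have "ip (- Bop X xi (Wt X xi s u)) (Wt X xi s v) = ip (Wt X xi s u) (Bop X xi (Wt X xi s v))"
      using Bop_skew[OF hX hxi Wt_pset[OF u] Wt_pset[OF v]] by (simp add: ip_neg_l)
    hence "ip (Wt X xi s u) (- Bop X xi (Wt X xi s v)) + ip (- Bop X xi (Wt X xi s u)) (Wt X xi s v) = 0"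
      by (simp add: ip_neg_r)
    with d show ?thesis by (simp add: has_vector_derivative_def)
  qed
  then obtain c where "\<forall>s\<in>UNIV. ?f s = c"
    using has_derivative_zero_constant[of UNIV ?f] by auto
  hence "?f t = ?f 0" by simp
  thus ?thesis by (simp add: Wt_zero)
qed

lemma opexp_agree:
  assumes v: "v \<in> pset X"
  shows "opexp (\<lambda>w. - t *\<^sub>R (ad (comp_h X xi) w + (1/2) *\<^sub>R pr_p X (ad (comp_p X xi) w))) v
         = Wt X xi t v"
proof -
  let ?f = "\<lambda>w. - t *\<^sub>R (ad (comp_h X xi) w + (1/2) *\<^sub>R pr_p X (ad (comp_p X xi) w))"
  let ?g = "\<lambda>w. (- t) *\<^sub>R Bop X xi w"
  have fg: "?f w = ?g w" if "w \<in> pset X" for w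
  proof -
    have "ad (px X xi) w \<in> gset" using ad_gset pset_gset[OF hX] px_p[OF hX hxi] that by blast
    thus ?thesis by (simp add: comp_h_eq[OF hX hxi] comp_p_eq[OF hX hxi] pr_p_eq[OF hX] Bop_def)
  qed
  have gS: "?g w \<in> pset X" if "w \<in> pset X" for w
    using that by (intro pset_scale[OF hX] Bop_pset[OF hX hxi])
  have "(?f ^^ m) v = (?g ^^ m) v" for m using iter_agree[of "pset X" ?f ?g v m] fg gS v by blast
  hence "opexp ?f v = opexp ?g v" by (simp add: opexp_def)
  also have "\<dots> = ap (exp ((- t) *\<^sub>R mk (Bop X xi))) v" by (rule opexp_eq[OF bl_Bop[OF hX hxi]])
  also have "\<dots> = Wt X xi t v" by (simp add: Wt_def LB_def)
  finally show ?thesis .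
qed

lemma Ssol_eq: assumes v: "v \<in> pset X" shows "Ssol X xi t v = Sp X xi t v"
proof -
  have "Ssol X xi t v = Ad (gexp (t *\<^sub>R comp_h X xi)) (Wt X xi t v)"
    unfolding Ssol_def by (simp only: opexp_agree[OF v])
  also have "\<dots> = Sp X xi t v"
    by (simp only: comp_h_eq[OF hX hxi] Ad_eq[OF hX hxi] Sp_def)
  finally show ?thesis .
qed

end


lemma conj_deriv:
  fixes E A :: "real \<Rightarrow> real^'m::finite^'m" and M A' :: "real^'m^'m"
  assumes dE: "(E has_vector_derivative E t ** M) (at t)" and sM: "skew M"
    and dA: "(A has_vector_derivative A') (at t)"
  shows "((\<lambda>s. E s ** A s ** transpose (E s)) has_vector_derivative
          E t ** (M ** A t - A t ** M + A') ** transpose (E t)) (at t)"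
proof -
  have dET: "((\<lambda>s. transpose (E s)) has_vector_derivative transpose (E t ** M)) (at t)"
    by (rule bounded_linear.has_vector_derivative[OF bounded_linear_transpose dE])
  have d1: "((\<lambda>s. E s ** A s) has_vector_derivative E t ** A' + E t ** M ** A t) (at t)"
    by (rule bounded_bilinear.has_vector_derivative[OF bounded_bilinear_mm dE dA])
  have d2: "((\<lambda>s. E s ** A s ** transpose (E s)) has_vector_derivative
      E t ** A t ** transpose (E t ** M) + (E t ** A' + E t ** M ** A t) ** transpose (E t)) (at t)"
    by (rule bounded_bilinear.has_vector_derivative[OF bounded_bilinear_mm d1 dET])
  have "transpose (E t ** M) = - (M ** transpose (E t))"
    using sM by (simp add: matrix_transpose_mul skew_def mm_neg_r)
  hence "E t ** A t ** transpose (E t ** M) + (E t ** A' + E t ** M ** A t) ** transpose (E t)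
       = E t ** (M ** A t - A t ** M + A') ** transpose (E t)"
    by (simp add: mm_simps matrix_mul_assoc algebra_simps)
  with d2 show ?thesis by simp
qed

lemma prj_diff: "prj X (a - b) = prj X a - prj X b"
  by (simp add: prj_def mm_simps algebra_simps)

context
  fixes X :: "real^'k::finite^'n::finite" and xi :: "('n,'k) gl"
  assumes hX: "transpose X ** X = mat 1" and hxi: "xi \<in> gset"
begin

lemma Sp_pset: "v \<in> pset X \<Longrightarrow> Sp X xi t v \<in> pset X"
  unfolding Sp_def by (rule AdT_pset[OF hX good_gt[OF hX hxi] Wt_pset[OF hX hxi]])

lemma gt_zero: "gt X xi 0 = (mat 1, mat 1)"
  by (simp add: gt_def mexp_zero[of "fst (hx X xi)", simplified] mexp_zero[of "snd (hx X xi)", simplified])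

lemma Sp_zero: "Sp X xi 0 v = v"
  by (simp add: Sp_def gt_zero AdT_one Wt_zero[OF hX hxi])

lemma Sp_add: "Sp X xi t (u + v) = Sp X xi t u + Sp X xi t v"
  by (simp add: Sp_def Wt_add[OF hX hxi] AdT_add)
lemma Sp_scale: "Sp X xi t (r *\<^sub>R v) = r *\<^sub>R Sp X xi t v"
  by (simp add: Sp_def Wt_scale[OF hX hxi] AdT_scale)

lemma Sp_iso: "u \<in> pset X \<Longrightarrow> v \<in> pset X \<Longrightarrow> ip (Sp X xi t u) (Sp X xi t v) = ip u v"
  unfolding Sp_def by (simp add: AdT_ip[OF hX good_gt[OF hX hxi]] Wt_iso[OF hX hxi])

lemma Sp_bij: "bij_betw (Sp X xi t) (pset X) (pset X)"
proof -
  let ?g = "gt X xi t"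
  have gg: "good X ?g" by (rule good_gt[OF hX hxi])
  have bk: "Wt X xi (- t) (AdT (ginv ?g) (Sp X xi t u)) = u" for u
    unfolding Sp_def by (simp add: AdT_inv'[OF hX gg] Wt_inv'[OF hX hxi])
  have "inj_on (Sp X xi t) (pset X)" by (metis bk inj_onI)
  moreover have "Sp X xi t ` pset X = pset X"
  proof
    show "Sp X xi t ` pset X \<subseteq> pset X" using Sp_pset by blast
  next
    show "pset X \<subseteq> Sp X xi t ` pset X"
    proof
      fix u assume u: "u \<in> pset X"
      let ?v = "Wt X xi (- t) (AdT (ginv ?g) u)"
      have "?v \<in> pset X" by (rule Wt_pset[OF hX hxi AdT_pset[OF hX good_inv[OF gg] u]])
      moreover have "Sp X xi t ?v = u" unfolding Sp_def by (simp add: Wt_inv[OF hX hxi] AdT_inv[OF hX gg])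
      ultimately show "u \<in> Sp X xi t ` pset X" by (metis image_eqI)
    qed
  qed
  ultimately show ?thesis by (simp add: bij_betw_def)
qed

lemma Sp_deriv:
  "((\<lambda>s. Sp X xi s v) has_vector_derivative
      AdT (gt X xi t) (- (1/2) *\<^sub>R prj X (ad (px X xi) (Wt X xi t v)))) (at t)"
proof -
  let ?W = "Wt X xi t v"
  have dW: "((\<lambda>s. Wt X xi s v) has_vector_derivative - Bop X xi ?W) (at t)" by (rule Wt_deriv[OF hX hxi])
  have dW1: "((\<lambda>s. fst (Wt X xi s v)) has_vector_derivative fst (- Bop X xi ?W)) (at t)"
    by (rule bounded_linear.has_vector_derivative[OF bounded_linear_fst dW])
  have dW2: "((\<lambda>s. snd (Wt X xi s v)) has_vector_derivative snd (- Bop X xi ?W)) (at t)"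
    by (rule bounded_linear.has_vector_derivative[OF bounded_linear_snd dW])
  have dE1: "((\<lambda>s. mexp (s *\<^sub>R fst (hx X xi))) has_vector_derivative mexp (t *\<^sub>R fst (hx X xi)) ** fst (hx X xi)) (at t)"
    by (rule mexp_deriv)
  have dE2: "((\<lambda>s. mexp (s *\<^sub>R snd (hx X xi))) has_vector_derivative mexp (t *\<^sub>R snd (hx X xi)) ** snd (hx X xi)) (at t)"
    by (rule mexp_deriv)
  have D: "((\<lambda>s. Sp X xi s v) has_vector_derivative AdT (gt X xi t) (ad (hx X xi) ?W + (- Bop X xi ?W))) (at t)"
    unfolding Sp_def AdT_def gt_def fst_conv snd_conv
    using has_vector_derivative_Pair[OF conj_deriv[OF dE1 hx_parts(1)[OF hX hxi] dW1]
                                        conj_deriv[OF dE2 hx_parts(2)[OF hX hxi] dW2]]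
    by (simp add: ad_def)
  have "ad (hx X xi) ?W + (- Bop X xi ?W) = - (1/2) *\<^sub>R prj X (ad (px X xi) ?W)"
    by (simp add: Bop_def)
  with D show ?thesis by simp
qed

lemma Mrhs_eq:
  assumes w: "w \<in> gset"
  shows "Mrhs X xi t (AdT (gt X xi t) w) = AdT (gt X xi t) (- (1/2) *\<^sub>R prj X (ad (px X xi) w))"
proof -
  have gg: "good X (gt X xi t)" by (rule good_gt[OF hX hxi])
  have pg: "px X xi \<in> gset" using pset_gset[OF hX px_p[OF hX hxi]] .
  have "Mrhs X xi t (AdT (gt X xi t) w) = - (1/2) *\<^sub>R pr_p X (ad (AdT (gt X xi t) (px X xi)) (AdT (gt X xi t) w))"
    by (simp add: Mrhs_def comp_h_eq[OF hX hxi] comp_p_eq[OF hX hxi] Ad_eq[OF hX hxi])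
  also have "\<dots> = - (1/2) *\<^sub>R pr_p X (AdT (gt X xi t) (ad (px X xi) w))"
    by (simp add: AdT_ad[OF hX gg])
  also have "\<dots> = - (1/2) *\<^sub>R prj X (AdT (gt X xi t) (ad (px X xi) w))"
    using pr_p_eq[OF hX AdT_gset[OF ad_gset[OF pg w]]] by simp
  also have "\<dots> = AdT (gt X xi t) (- (1/2) *\<^sub>R prj X (ad (px X xi) w))"
    by (simp add: AdT_prj[OF hX gg ad_gset[OF pg w]] AdT_scale AdT_neg)
  finally show ?thesis .
qed

lemma Sp_ode: "v \<in> pset X \<Longrightarrow>
   ((\<lambda>s. Sp X xi s v) has_vector_derivative Mrhs X xi t (Sp X xi t v)) (at t)"
  using Sp_deriv[of v t] Mrhs_eq[OF pset_gset[OF hX Wt_pset[OF hX hxi]], of v t t]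
  by (simp add: Sp_def)

lemma Mrhs_lin:
  assumes a: "a \<in> gset" and b: "b \<in> gset"
  shows "Mrhs X xi t a - Mrhs X xi t b = Mrhs X xi t (a - b)"
proof -
  let ?c = "Ad (gexp (t *\<^sub>R comp_h X xi)) (comp_p X xi)"
  have cg: "?c \<in> gset"
    using AdT_gset[OF pset_gset[OF hX px_p[OF hX hxi]]]
    by (simp add: comp_h_eq[OF hX hxi] comp_p_eq[OF hX hxi] Ad_eq[OF hX hxi])
  have ga: "ad ?c a \<in> gset" and gb: "ad ?c b \<in> gset" and gab: "ad ?c (a - b) \<in> gset"
    using ad_gset cg a b gset_diff by blast+
  show ?thesis unfolding Mrhs_def
    by (simp only: pr_p_eq[OF hX ga] pr_p_eq[OF hX gb] pr_p_eq[OF hX gab])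
       (simp add: ad_diff_r prj_diff algebra_simps)
qed

lemma Mrhs_skew:
  assumes w: "w \<in> pset X"
  shows "ip (Mrhs X xi t w) w = 0"
proof -
  let ?c = "Ad (gexp (t *\<^sub>R comp_h X xi)) (comp_p X xi)"
  have cg: "?c \<in> gset"
    using AdT_gset[OF pset_gset[OF hX px_p[OF hX hxi]]]
    by (simp add: comp_h_eq[OF hX hxi] comp_p_eq[OF hX hxi] Ad_eq[OF hX hxi])
  have g: "ad ?c w \<in> gset" using ad_gset cg pset_gset[OF hX w] by blast
  have "ip (ad ?c w) w = - ip w (ad ?c w)" by (rule ip_ad)
  hence z: "ip (ad ?c w) w = 0" using ip_sym[of w "ad ?c w"] by simp
  show ?thesis unfolding Mrhs_def
    by (simp add: ip_neg_l ip_scale_l pr_p_eq[OF hX g] ip_prj[OF hX g w] z)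
qed

lemma uniq:
  assumes T0: "\<forall>v\<in>pset X. T 0 v = v"
    and TD: "\<forall>t. \<forall>v\<in>pset X. T t v \<in> pset X \<and> ((\<lambda>s. T s v) has_vector_derivative Mrhs X xi t (T t v)) (at t)"
    and v: "v \<in> pset X"
  shows "T t v = Sp X xi t v"
proof -
  let ?d = "\<lambda>s. T s v - Sp X xi s v"
  have dp: "?d s \<in> pset X" for s using TD v Sp_pset pset_diff[OF hX] by blast
  have dd: "(?d has_vector_derivative Mrhs X xi s (?d s)) (at s)" for s
  proof -
    have "(?d has_vector_derivative Mrhs X xi s (T s v) - Mrhs X xi s (Sp X xi s v)) (at s)"
      using TD v Sp_ode[OF v] by (intro has_vector_derivative_diff) auto
    moreover have "Mrhs X xi s (T s v) - Mrhs X xi s (Sp X xi s v) = Mrhs X xi s (?d s)"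
      using Mrhs_lin TD v Sp_pset pset_gset[OF hX] by metis
    ultimately show ?thesis by simp
  qed
  let ?f = "\<lambda>s. ip (?d s) (?d s)"
  have "(?f has_derivative (\<lambda>h. 0)) (at s)" for s
  proof -
    have "(?f has_vector_derivative ip (?d s) (Mrhs X xi s (?d s)) + ip (Mrhs X xi s (?d s)) (?d s)) (at s)"
      by (rule bounded_bilinear.has_vector_derivative[OF bounded_bilinear_ip dd dd])
    moreover have "ip (?d s) (Mrhs X xi s (?d s)) + ip (Mrhs X xi s (?d s)) (?d s) = 0"
      using Mrhs_skew[OF dp[of s], of s] ip_sym[of "?d s" "Mrhs X xi s (?d s)"] by simp
    ultimately show ?thesis by (simp add: has_vector_derivative_def)
  qed
  then obtain c where "\<forall>s\<in>UNIV. ?f s = c"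
    using has_derivative_zero_constant[of UNIV ?f] by auto
  hence "?f t = ?f 0" by simp
  also have "?d 0 = 0" using T0 v Sp_zero by simp
  hence "?f 0 = 0" by (simp add: ip_zero_l)
  finally have "?d t = 0" using p_def[OF hX dp[of t]] by blast
  thus ?thesis by simp
qed

end


theorem lemma5p14:
  fixes X :: "real^'k^'n" and xi :: "('n,'k) gl"
  assumes "X \<in> stiefel" and "xi \<in> gset"
  shows "(\<forall>t. Ssol X xi t \<in> Op X)
       \<and> (\<forall>v\<in>pset X. Ssol X xi 0 v = v)
       \<and> (\<forall>t. \<forall>v\<in>pset X. ((\<lambda>s. Ssol X xi s v) has_vector_derivative
              Mrhs X xi t (Ssol X xi t v)) (at t))
       \<and> (\<forall>T :: real \<Rightarrow> ('n,'k) gl \<Rightarrow> ('n,'k) gl.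
            (\<forall>v\<in>pset X. T 0 v = v)
            \<and> (\<forall>t. \<forall>v\<in>pset X. T t v \<in> pset X
                 \<and> ((\<lambda>s. T s v) has_vector_derivative Mrhs X xi t (T t v)) (at t))
            \<longrightarrow> (\<forall>t. \<forall>v\<in>pset X. T t v = Ssol X xi t v))"
proof -
  have hX: "transpose X ** X = mat 1" using assms(1) by (simp add: stiefel_def)
  note hxi = assms(2)
  note eq = Ssol_eq[OF hX hxi]
  have A: "Ssol X xi t \<in> Op X" for t
  proof -
    have a1: "\<forall>u\<in>pset X. \<forall>v\<in>pset X. Ssol X xi t (u + v) = Ssol X xi t u + Ssol X xi t v"
      using eq pset_add[OF hX] Sp_add[OF hX hxi] by simp
    have a2: "\<forall>c. \<forall>u\<in>pset X. Ssol X xi t (c *\<^sub>R u) = c *\<^sub>R Ssol X xi t u"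
      using eq pset_scale[OF hX] Sp_scale[OF hX hxi] by simp
    have a3: "bij_betw (Ssol X xi t) (pset X) (pset X)"
      using bij_betw_cong[of "pset X" "Ssol X xi t" "Sp X xi t" "pset X"] eq Sp_bij[OF hX hxi] by simp
    have a4: "\<forall>u\<in>pset X. \<forall>v\<in>pset X. ip (Ssol X xi t u) (Ssol X xi t v) = ip u v"
      using eq Sp_iso[OF hX hxi] by simp
    show ?thesis unfolding Op_def using a1 a2 a3 a4 by blast
  qed
  have B: "\<forall>v\<in>pset X. Ssol X xi 0 v = v"
    using eq Sp_zero[OF hX hxi] by simp
  have C: "((\<lambda>s. Ssol X xi s v) has_vector_derivative Mrhs X xi t (Ssol X xi t v)) (at t)"
    if v: "v \<in> pset X" for t v
  proof -
    have "(\<lambda>s. Ssol X xi s v) = (\<lambda>s. Sp X xi s v)" using eq v by auto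
    thus ?thesis using Sp_ode[OF hX hxi v, of t] eq v by simp
  qed
  have D: "\<forall>t. \<forall>v\<in>pset X. T t v = Ssol X xi t v"
    if "(\<forall>v\<in>pset X. T 0 v = v)
            \<and> (\<forall>t. \<forall>v\<in>pset X. T t v \<in> pset X
                 \<and> ((\<lambda>s. T s v) has_vector_derivative Mrhs X xi t (T t v)) (at t))"
    for T :: "real \<Rightarrow> ('n,'k) gl \<Rightarrow> ('n,'k) gl"
    using uniq[OF hX hxi, of T] that eq by simp
  show ?thesis using A B C D by blast
qed


end
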